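(* Let $\mathbf{B}(t)$ be an $n$-dimensional Brownian motion and fix $a>0$. Then almost surely, for all sufficiently large $j \in \mathbb{N}$, there exists an integer $i$ with $1 \le i \le 2^j - 1$ such that (1) $\left|\mathbf{B}\left(\frac{i+1}{2^j}\right) - \mathbf{B}\left(\frac{i}{2^j}\right)\right| \le \frac{2}{\sqrt{2}^{\,j}}$, and (2) $\max_{\frac{i}{2^j}\le t\le\frac{i+1}{2^j}} \left|\mathbf{B}(t) - \mathbf{B}\left(\frac{i}{2^j}\right)\right| \ge \frac{a}{\sqrt{2}^{\,j}}$.
   Context: An $n$-dimensional Brownian motion is $(B_1(t),\dots,B_n(t))$ with independent one-dimensional Brownian motions $B_k$; $|\cdot|$ is the Euclidean norm. *)

theory Defs
  imports "HOL-Probability.Probability"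
begin

definition bm1 :: "'a measure \<Rightarrow> (real \<Rightarrow> 'a \<Rightarrow> real) \<Rightarrow> bool" where
  "bm1 M B \<longleftrightarrow>
     prob_space M \<and>
     (\<forall>t\<ge>0. B t \<in> borel_measurable M) \<and>
     (AE \<omega> in M. B 0 \<omega> = 0) \<and>
     (AE \<omega> in M. continuous_on {0..} (\<lambda>t. B t \<omega>)) \<and>
     (\<forall>s t. 0 \<le> s \<and> s < t \<longrightarrow>
        distributed M lborel (\<lambda>\<omega>. B t \<omega> - B s \<omega>)
          (\<lambda>x. ennreal (normal_density 0 (sqrt (t - s)) x))) \<and>
     (\<forall>(m::nat) (\<tau>::nat \<Rightarrow> real). 0 \<le> \<tau> 0 \<and> (\<forall>i<m. \<tau> i < \<tau> (Suc i)) \<longrightarrow>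
        prob_space.indep_vars M (\<lambda>_. borel)
          (\<lambda>i \<omega>. B (\<tau> (Suc i)) \<omega> - B (\<tau> i) \<omega>) {..<m})"

text \<open>An n-dimensional Brownian motion, n = CARD('n): the coordinates
B_k are one-dimensional Brownian motions which are independent (as
processes, i.e. as random elements of the path space on [0,\<infinity>)).\<close>
definition brownian_motion :: "'a measure \<Rightarrow> (real \<Rightarrow> 'a \<Rightarrow> real ^ 'n) \<Rightarrow> bool" where
  "brownian_motion M B \<longleftrightarrow>
     prob_space M \<and>
     (\<forall>k. bm1 M (\<lambda>t \<omega>. B t \<omega> $ k)) \<and>
     prob_space.indep_vars M (\<lambda>_. PiM {0::real..} (\<lambda>_. borel))
        (\<lambda>k \<omega>. restrict (\<lambda>t. B t \<omega> $ k) {0..}) UNIV"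

end

theory Submission
  imports Defs
begin


lemma bm1_incr_indep:
  assumes bm: "bm1 M X" and tau0: "\<And>m. 0 \<le> \<tau> m" and tau: "\<And>m. \<tau> m < \<tau> (Suc m)"
    and S: "finite S" and C: "\<And>m. m \<in> S \<Longrightarrow> C m \<in> sets borel"
  shows "measure M {\<omega>\<in>space M. \<forall>m\<in>S. X (\<tau> (Suc m)) \<omega> - X (\<tau> m) \<omega> \<in> C m}
       = (\<Prod>m\<in>S. measure M {\<omega>\<in>space M. X (\<tau> (Suc m)) \<omega> - X (\<tau> m) \<omega> \<in> C m})"
proof -
  interpret prob_space M using bm by (simp add: bm1_def)
  show ?thesis
  proof (cases "S = {}")
    case True then show ?thesis by (simp add: prob_space)
  next
    case False
    let ?m = "Suc (Max S)"
    have iv: "indep_vars (\<lambda>_. borel) (\<lambda>i \<omega>. X (\<tau> (Suc i)) \<omega> - X (\<tau> i) \<omega>) {..<?m}"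
      using bm tau0 tau unfolding bm1_def by blast
    have sub: "S \<subseteq> {..<?m}" using S by (auto simp: less_Suc_eq_le)
    have "prob (\<Inter>i\<in>S. (\<lambda>\<omega>. X (\<tau> (Suc i)) \<omega> - X (\<tau> i) \<omega>) -` C i \<inter> space M)
       = (\<Prod>i\<in>S. prob ((\<lambda>\<omega>. X (\<tau> (Suc i)) \<omega> - X (\<tau> i) \<omega>) -` C i \<inter> space M))"
      by (rule indep_varsD[OF iv False S sub]) (use C in auto)
    moreover have "(\<Inter>i\<in>S. (\<lambda>\<omega>. X (\<tau> (Suc i)) \<omega> - X (\<tau> i) \<omega>) -` C i \<inter> space M)
       = {\<omega>\<in>space M. \<forall>m\<in>S. X (\<tau> (Suc m)) \<omega> - X (\<tau> m) \<omega> \<in> C m}"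
      using False by auto
    moreover have "\<And>i. (\<lambda>\<omega>. X (\<tau> (Suc i)) \<omega> - X (\<tau> i) \<omega>) -` C i \<inter> space M
       = {\<omega>\<in>space M. X (\<tau> (Suc i)) \<omega> - X (\<tau> i) \<omega> \<in> C i}" by auto
    ultimately show ?thesis by simp
  qed
qed

definition G :: "real \<Rightarrow> real \<Rightarrow> real" where
  "G c d = measure (density lborel (\<lambda>x. ennreal (std_normal_density x))) {c..d}"

lemma bm1_gauss:
  assumes bm: "bm1 M X" and st: "0 \<le> s" "s < t" and sig: "\<sigma> = sqrt (t - s)"
  shows "measure M {\<omega>\<in>space M. X t \<omega> - X s \<omega> \<in> {c * \<sigma> .. d * \<sigma>}} = G c d"
proof -
  interpret prob_space M using bm by (simp add: bm1_def)
  have sp: "\<sigma> > 0" using st sig by simp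
  have D: "distributed M lborel (\<lambda>\<omega>. X t \<omega> - X s \<omega>) (\<lambda>x. ennreal (normal_density 0 \<sigma> x))"
    using bm st sig unfolding bm1_def by blast
  then have Z: "distributed M lborel (\<lambda>\<omega>. (X t \<omega> - X s \<omega> - 0) / \<sigma>) (\<lambda>x. ennreal (std_normal_density x))"
    using normal_standard_normal_convert[OF sp, of "\<lambda>\<omega>. X t \<omega> - X s \<omega>" 0] by simp
  have eq: "{\<omega>\<in>space M. X t \<omega> - X s \<omega> \<in> {c * \<sigma> .. d * \<sigma>}}
     = (\<lambda>\<omega>. (X t \<omega> - X s \<omega> - 0) / \<sigma>) -` {c..d} \<inter> space M"
    using sp by (auto simp: field_simps)
  have "measure M ((\<lambda>\<omega>. (X t \<omega> - X s \<omega> - 0) / \<sigma>) -` {c..d} \<inter> space M)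
      = measure (distr M lborel (\<lambda>\<omega>. (X t \<omega> - X s \<omega> - 0) / \<sigma>)) {c..d}"
    by (rule measure_distr[symmetric]) (use Z[THEN distributed_measurable] in auto)
  also have "\<dots> = G c d"
    unfolding G_def using Z by (simp add: distributed_distr_eq_density)
  finally show ?thesis using eq by simp
qed

lemma G_pos:
  assumes "c < d" shows "G c d > 0"
proof -
  have ps: "prob_space (density lborel (\<lambda>x. ennreal (std_normal_density x)))"
    by (rule prob_space_normal_density) simp
  have "emeasure (density lborel (\<lambda>x. ennreal (std_normal_density x))) {c..d}
        = (\<integral>\<^sup>+x. ennreal (std_normal_density x) * indicator {c..d} x \<partial>lborel)"
    by (simp add: emeasure_density)
  moreover have "(\<integral>\<^sup>+x. ennreal (std_normal_density x) * indicator {c..d} x \<partial>lborel) \<noteq> 0"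
  proof
    assume that: "(\<integral>\<^sup>+x. ennreal (std_normal_density x) * indicator {c..d} x \<partial>lborel) = 0"
    then have "AE x in lborel. ennreal (std_normal_density x) * indicator {c..d} x = 0"
    proof -
      have "(\<lambda>x. ennreal (std_normal_density x) * indicator {c..d} x) \<in> borel_measurable lborel"
        by measurable
      with that show ?thesis using nn_integral_0_iff_AE by blast
    qed
    then have "AE x in lborel. x \<notin> {c..d}"
      proof eventually_elim
      case (elim x)
      have "std_normal_density x > 0" by (rule normal_density_pos) simp
      with elim show ?case by (auto split: split_indicator)
    qed
    then have "{c..d} \<in> null_sets lborel"
      using AE_iff_null_sets[of "{c..d}" lborel] by simp
    then show False using assms by (simp add: null_sets_def)
  qed
  ultimately have "emeasure (density lborel (\<lambda>x. ennreal (std_normal_density x))) {c..d} \<noteq> 0" by simp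
  then show ?thesis unfolding G_def
    using finite_measure.emeasure_eq_measure[OF prob_space.finite_measure[OF ps]]
    by (metis ennreal_0 measure_nonneg order_le_less)
qed




lemma bm_incr_indep:
  fixes B :: "real \<Rightarrow> 'a \<Rightarrow> real ^ 'n"
  assumes bm: "brownian_motion M B" and tau0: "\<And>m. 0 \<le> \<tau> m" and tau: "\<And>m. \<tau> m < \<tau> (Suc m)"
    and S: "finite S" and C: "\<And>k m. m \<in> S \<Longrightarrow> C k m \<in> sets borel"
  shows "measure M {\<omega>\<in>space M. \<forall>k. \<forall>m\<in>S. B (\<tau> (Suc m)) \<omega> $ k - B (\<tau> m) \<omega> $ k \<in> C k m}
       = (\<Prod>k\<in>UNIV. \<Prod>m\<in>S. measure M {\<omega>\<in>space M. B (\<tau> (Suc m)) \<omega> $ k - B (\<tau> m) \<omega> $ k \<in> C k m})"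
proof -
  interpret prob_space M using bm by (simp add: brownian_motion_def)
  let ?N = "PiM {0::real..} (\<lambda>_. borel :: real measure)"
  let ?P = "\<lambda>k \<omega>. restrict (\<lambda>t. B t \<omega> $ k) {0..}"
  have iv: "indep_vars (\<lambda>_. ?N) ?P UNIV"
    using bm unfolding brownian_motion_def by blast
  define A where "A k = {f\<in>space ?N. \<forall>m\<in>S. f (\<tau> (Suc m)) - f (\<tau> m) \<in> C k m}" for k
  have A: "A k \<in> sets ?N" for k
  proof -
    have "A k = space ?N \<inter> (\<Inter>m\<in>S. (\<lambda>f. f (\<tau> (Suc m)) - f (\<tau> m)) -` C k m \<inter> space ?N)"
      unfolding A_def by auto
    also have "\<dots> \<in> sets ?N"
    proof (cases "S = {}")
      case True then show ?thesis by simp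
    next
      case False
      have "(\<lambda>f. f (\<tau> (Suc m)) - f (\<tau> m)) \<in> borel_measurable ?N" for m
        using tau0 by (intro borel_measurable_diff measurable_component_singleton) auto
      then have "(\<Inter>m\<in>S. (\<lambda>f. f (\<tau> (Suc m)) - f (\<tau> m)) -` C k m \<inter> space ?N) \<in> sets ?N"
        using S False C by (intro sets.finite_INT) (auto intro: measurable_sets)
      then show ?thesis by (simp add: Int_absorb1 sets.sets_into_space)
    qed
    finally show ?thesis .
  qed
  have pre: "?P k -` A k \<inter> space M = {\<omega>\<in>space M. \<forall>m\<in>S. B (\<tau> (Suc m)) \<omega> $ k - B (\<tau> m) \<omega> $ k \<in> C k m}" for k
    using tau0 by (auto simp: A_def space_PiM)
  have "prob (\<Inter>k\<in>UNIV. ?P k -` A k \<inter> space M) = (\<Prod>k\<in>UNIV. prob (?P k -` A k \<inter> space M))"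
    by (rule indep_varsD[OF iv]) (auto intro: A)
  moreover have "(\<Inter>k\<in>UNIV. ?P k -` A k \<inter> space M) = {\<omega>\<in>space M. \<forall>k. \<forall>m\<in>S. B (\<tau> (Suc m)) \<omega> $ k - B (\<tau> m) \<omega> $ k \<in> C k m}"
    unfolding pre by auto
  moreover have "prob (?P k -` A k \<inter> space M) = (\<Prod>m\<in>S. measure M {\<omega>\<in>space M. B (\<tau> (Suc m)) \<omega> $ k - B (\<tau> m) \<omega> $ k \<in> C k m})" for k
    unfolding pre
    by (rule bm1_incr_indep[where X="\<lambda>t \<omega>. B t \<omega> $ k"]) (use bm tau0 tau S C in \<open>auto simp: brownian_motion_def\<close>)
  ultimately show ?thesis by simp
qed




lemma det:
  fixes Bw :: "real \<Rightarrow> real^'n" and j i :: nat and a \<sigma> \<epsilon> :: real and c :: "'n \<Rightarrow> real" and kk :: 'n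
  assumes cont: "\<forall>k. continuous_on {0..} (\<lambda>t. Bw t $ k)"
   and sig: "\<sigma> = 1 / sqrt 2 ^ Suc j" and eps: "\<epsilon> = 1 / real CARD('n)"
   and c: "\<And>k. c k \<ge> 0" "c kk = a * sqrt 2" and a: "a > 0"
   and X: "\<forall>k. Bw (real (2*i+1) / 2^Suc j) $ k - Bw (real i / 2^j) $ k \<in> {c k * \<sigma> .. (c k + \<epsilon>) * \<sigma>}"
   and Y: "\<forall>k. Bw ((real i + 1) / 2^j) $ k - Bw (real (2*i+1) / 2^Suc j) $ k \<in> {(- c k - \<epsilon>) * \<sigma> .. (- c k) * \<sigma>}"
  shows "norm (Bw ((real i + 1) / 2 ^ j) - Bw (real i / 2 ^ j)) \<le> 2 / sqrt 2 ^ j \<and>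
         (SUP t\<in>{real i / 2 ^ j .. (real i + 1) / 2 ^ j}. norm (Bw t - Bw (real i / 2 ^ j))) \<ge> a / sqrt 2 ^ j"
proof
  let ?s0 = "real i / 2^j" and ?s1 = "real (2*i+1) / 2^Suc j" and ?s2 = "(real i + 1) / 2^j"
  have sp: "\<sigma> > 0" using sig by simp
  have ep: "\<epsilon> > 0" using eps by simp
  have "norm (Bw ?s2 - Bw ?s0) \<le> (\<Sum>k\<in>UNIV. \<bar>(Bw ?s2 - Bw ?s0) $ k\<bar>)" by (rule norm_le_l1_cart)
  also have "\<dots> \<le> (\<Sum>k\<in>(UNIV::'n set). \<epsilon> * \<sigma>)"
  proof (rule sum_mono)
    fix k :: 'n
    have "(Bw ?s2 - Bw ?s0) $ k = (Bw ?s1 $ k - Bw ?s0 $ k) + (Bw ?s2 $ k - Bw ?s1 $ k)" by simp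
    then show "\<bar>(Bw ?s2 - Bw ?s0) $ k\<bar> \<le> \<epsilon> * \<sigma>" using X[rule_format, of k] Y[rule_format, of k]
      by (auto simp: algebra_simps abs_le_iff)
  qed
  also have "\<dots> = \<sigma>" using eps by simp
  also have "\<sigma> \<le> 2 / sqrt 2 ^ j"
  proof -
    have "\<sigma> = 1 / (sqrt 2 * sqrt 2 ^ j)" using sig by simp
    also have "\<dots> \<le> 1 / sqrt 2 ^ j" by (simp add: field_simps)
    also have "\<dots> \<le> 2 / sqrt 2 ^ j" by (simp add: divide_right_mono)
    finally show ?thesis .
  qed
  finally show "norm (Bw ?s2 - Bw ?s0) \<le> 2 / sqrt 2 ^ j" .
next
  let ?s0 = "real i / 2^j" and ?s1 = "real (2*i+1) / 2^Suc j" and ?s2 = "(real i + 1) / 2^j"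
  have sp: "\<sigma> > 0" using sig by simp
  have cv: "continuous_on {0..} Bw"
  proof -
    have "continuous_on {0..} (\<lambda>t. \<chi> k. Bw t $ k)" using cont by (intro continuous_on_vec_lambda) auto
    then show ?thesis by simp
  qed
  have s01: "?s0 \<le> ?s1" "?s1 \<le> ?s2" by (auto simp: field_simps)
  have sub: "{?s0..?s2} \<subseteq> {0..}" by auto
  have "compact ((\<lambda>t. norm (Bw t - Bw ?s0)) ` {?s0..?s2})"
  proof (rule compact_continuous_image)
    have "continuous_on {?s0..?s2} Bw" using cv sub by (rule continuous_on_subset)
    then show "continuous_on {?s0..?s2} (\<lambda>t. norm (Bw t - Bw ?s0))" by (intro continuous_intros)
  qed simp
  then have bdd: "bdd_above ((\<lambda>t. norm (Bw t - Bw ?s0)) ` {?s0..?s2})"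
    by (rule bounded_imp_bdd_above[OF compact_imp_bounded])
  have "a / sqrt 2 ^ j = c kk * \<sigma>" using c sig by (simp add: field_simps)
  also have "\<dots> \<le> \<bar>(Bw ?s1 - Bw ?s0) $ kk\<bar>" using X[rule_format, of kk] c(1)[of kk] sp by auto
  also have "\<dots> \<le> norm (Bw ?s1 - Bw ?s0)" by (rule component_le_norm_cart)
  also have "\<dots> \<le> (SUP t\<in>{?s0..?s2}. norm (Bw t - Bw ?s0))"
    using s01 bdd by (intro cSUP_upper) auto
  finally show "(SUP t\<in>{?s0..?s2}. norm (Bw t - Bw ?s0)) \<ge> a / sqrt 2 ^ j" .
qed




theorem lemma3p1:
  fixes M :: "'a measure" and B :: "real \<Rightarrow> 'a \<Rightarrow> real ^ 'n" and a :: real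
  assumes "brownian_motion M B" and "a > 0"
  shows "AE \<omega> in M. eventually (\<lambda>j::nat. \<exists>i::nat. 1 \<le> i \<and> i \<le> 2 ^ j - 1 \<and>
            norm (B ((real i + 1) / 2 ^ j) \<omega> - B (real i / 2 ^ j) \<omega>) \<le> 2 / sqrt 2 ^ j \<and>
            (SUP t\<in>{real i / 2 ^ j .. (real i + 1) / 2 ^ j}.
                norm (B t \<omega> - B (real i / 2 ^ j) \<omega>)) \<ge> a / sqrt 2 ^ j) sequentially"
proof -
  note bm = assms(1)
  interpret prob_space M using bm by (simp add: brownian_motion_def)
  have bm1: "bm1 M (\<lambda>t \<omega>. B t \<omega> $ k)" for k using bm by (simp add: brownian_motion_def)
  define k0 :: 'n where "k0 = undefined"
  define \<epsilon> where "\<epsilon> = 1 / real CARD('n)"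
  define c where "c k = (if k = k0 then a * sqrt 2 else 0)" for k
  define lo where "lo k r = (if r = (0::nat) then c k else - c k - \<epsilon>)" for k r
  define hi where "hi k r = (if r = (0::nat) then c k + \<epsilon> else - c k)" for k r
  define \<sigma> where "\<sigma> j = 1 / sqrt 2 ^ Suc j" for j :: nat
  define \<tau> where "\<tau> j m = real m / 2 ^ Suc j" for j m :: nat
  define C where "C j k m = {lo k (m mod 2) * \<sigma> j .. hi k (m mod 2) * \<sigma> j}" for j k m
  define F where "F j i = {\<omega>\<in>space M. \<forall>k. \<forall>m\<in>{2*i, 2*i+1}. B (\<tau> j (Suc m)) \<omega> $ k - B (\<tau> j m) \<omega> $ k \<in> C j k m}" for j i
  define q where "q = (\<Prod>k\<in>UNIV. G (lo k 0) (hi k 0) * G (lo k 1) (hi k 1))"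
  define I where "I j = {1..(2::nat)^j - 1}" for j :: nat
  have ep: "\<epsilon> > 0" by (simp add: \<epsilon>_def)
  have c0: "c k \<ge> 0" for k using assms(2) by (simp add: c_def)
  have lohi: "lo k r < hi k r" for k r using ep by (simp add: lo_def hi_def)
  have qpos: "q > 0" unfolding q_def using G_pos[OF lohi] by (intro prod_pos) (simp add: mult_pos_pos)
  have tau0: "0 \<le> \<tau> j m" for j m by (simp add: \<tau>_def)
  have tau: "\<tau> j m < \<tau> j (Suc m)" for j m by (simp add: \<tau>_def divide_strict_right_mono)
  have sigeq: "\<sigma> j = sqrt (\<tau> j (Suc m) - \<tau> j m)" for j m
  proof -
    have "\<tau> j (Suc m) - \<tau> j m = 1 / 2 ^ Suc j" by (simp add: \<tau>_def diff_divide_distrib[symmetric])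
    then show ?thesis by (simp add: \<sigma>_def real_sqrt_divide real_sqrt_mult real_sqrt_power)
  qed
  have Cm[measurable]: "C j k m \<in> sets borel" for j k m by (simp add: C_def)
  have Bm[measurable]: "(\<lambda>\<omega>. B (\<tau> j m) \<omega> $ k) \<in> borel_measurable M" for j m k
    using bm1[of k] tau0[of j m] by (simp add: bm1_def)
  have single: "measure M {\<omega>\<in>space M. B (\<tau> j (Suc m)) \<omega> $ k - B (\<tau> j m) \<omega> $ k \<in> C j k m}
      = G (lo k (m mod 2)) (hi k (m mod 2))" for j k m
    unfolding C_def by (rule bm1_gauss[OF bm1 tau0 tau sigeq])
  have Fm: "F j i \<in> sets M" for j i unfolding F_def by measurable
  have inter: "prob (\<Inter>i\<in>J. F j i) = q ^ card J" if J: "finite J" "J \<noteq> {}" for j J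
  proof -
    define S where "S = (\<Union>i\<in>J. {2*i, 2*i+1})"
    have S: "finite S" using J by (simp add: S_def)
    have "(\<Inter>i\<in>J. F j i) = {\<omega>\<in>space M. \<forall>k. \<forall>m\<in>S. B (\<tau> j (Suc m)) \<omega> $ k - B (\<tau> j m) \<omega> $ k \<in> C j k m}"
      using J by (auto simp: F_def S_def)
    then have "prob (\<Inter>i\<in>J. F j i) = (\<Prod>k\<in>UNIV. \<Prod>m\<in>S. measure M {\<omega>\<in>space M. B (\<tau> j (Suc m)) \<omega> $ k - B (\<tau> j m) \<omega> $ k \<in> C j k m})"
      using bm_incr_indep[where \<tau>="\<tau> j" and C="C j" and S=S, OF bm tau0 tau S] by simp
    also have "\<dots> = (\<Prod>k\<in>UNIV. \<Prod>m\<in>S. G (lo k (m mod 2)) (hi k (m mod 2)))"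
      by (simp only: single)
    also have "\<dots> = (\<Prod>k\<in>UNIV. \<Prod>i\<in>J. G (lo k 0) (hi k 0) * G (lo k 1) (hi k 1))"
    proof (rule prod.cong[OF refl])
      fix k
      have "(\<Prod>m\<in>S. G (lo k (m mod 2)) (hi k (m mod 2))) = (\<Prod>i\<in>J. \<Prod>m\<in>{2*i, 2*i+1}. G (lo k (m mod 2)) (hi k (m mod 2)))"
        unfolding S_def by (rule prod.UNION_disjoint) (use J in auto)
      also have "\<dots> = (\<Prod>i\<in>J. G (lo k 0) (hi k 0) * G (lo k 1) (hi k 1))"
        by (rule prod.cong[OF refl]) simp
      finally show "(\<Prod>m\<in>S. G (lo k (m mod 2)) (hi k (m mod 2))) = (\<Prod>i\<in>J. G (lo k 0) (hi k 0) * G (lo k 1) (hi k 1))" .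
    qed
    also have "\<dots> = (\<Prod>i\<in>J. q)" unfolding q_def by (rule prod.swap)
    also have "\<dots> = q ^ card J" by simp
    finally show ?thesis .
  qed
  have Fq: "prob (F j i) = q" for j i using inter[of "{i}" j] by simp
  have q1: "q \<le> 1" using Fq[of 0 0] by (metis prob_le_1)
  have indep: "indep_events (F j) (I j)" for j
    by (rule indep_eventsI) (use Fm inter Fq in auto)
  have indepc: "indep_sets (\<lambda>i. sigma_sets (space M) {F j i}) (I j)" for j
    using indep[of j] unfolding indep_events_def_alt
    by (rule indep_sets_sigma) (simp add: Int_stable_def)
  define Bad where "Bad j = space M - (\<Union>i\<in>I j. F j i)" for j
  have Badm: "Bad j \<in> sets M" for j unfolding Bad_def I_def using Fm by auto
  have badb: "prob (Bad j) \<le> (1 - q) ^ j" for j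
  proof (cases "j = 0")
    case True then show ?thesis by simp
  next
    case False
    have h2: "(2::nat) \<le> 2^j" using power_increasing[of 1 j "2::nat"] False by simp
    have "1 \<le> 2^j - (1::nat)" using h2 by linarith
    then have Ine: "I j \<noteq> {}" unfolding I_def by auto
    have fin: "finite (I j)" by (simp add: I_def)
    have eqB: "Bad j = (\<Inter>i\<in>I j. space M - F j i)" using Ine by (auto simp: Bad_def)
    have "prob (\<Inter>i\<in>I j. space M - F j i) = (\<Prod>i\<in>I j. prob (space M - F j i))"
      by (rule indep_setsD[OF indepc[of j] subset_refl Ine fin]) (auto intro: sigma_sets.Compl sigma_sets.Basic)
    then have "prob (Bad j) = (\<Prod>i\<in>I j. prob (space M - F j i))" by (simp only: eqB)
    also have "\<dots> = (1 - q) ^ card (I j)" using Fm by (simp add: prob_compl Fq)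
    also have "\<dots> = (1 - q) ^ (2^j - 1)" by (simp add: I_def)
    also have "\<dots> \<le> (1 - q) ^ j"
    proof (rule power_decreasing)
      have "j < 2 ^ j" by (rule less_exp)
      then show "j \<le> 2 ^ j - 1" by linarith
    qed (use qpos q1 in auto)
    finally show ?thesis .
  qed
  have summ: "summable (\<lambda>j. measure M (Bad j))"
  proof (rule summable_comparison_test')
    show "summable (\<lambda>j. (1 - q) ^ j)" by (rule summable_geometric) (use qpos q1 in auto)
    show "norm (measure M (Bad j)) \<le> (1 - q) ^ j" for j using badb[of j] by simp
  qed
  have AEb: "AE \<omega> in M. eventually (\<lambda>j. \<omega> \<in> space M - Bad j) sequentially"
    by (rule borel_cantelli_AE1) (use Badm summ in \<open>auto simp: emeasure_eq_measure\<close>)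
  have AEc: "AE \<omega> in M. \<forall>k\<in>UNIV. continuous_on {0..} (\<lambda>t. B t \<omega> $ k)"
    by (rule AE_finite_allI) (use bm1 in \<open>auto simp: bm1_def\<close>)
  have t0: "\<tau> j (2*i) = real i / 2^j" for j i by (simp add: \<tau>_def)
  have t1: "\<tau> j (Suc (2*i)) = real (2*i+1) / 2^Suc j" for j i by (simp add: \<tau>_def)
  have t2: "\<tau> j (Suc (Suc (2*i))) = (real i + 1) / 2^j" for j i by (simp add: \<tau>_def field_simps)
  show ?thesis using AEb AEc
  proof eventually_elim
    case (elim \<omega>)
    show ?case using elim(1)
    proof (rule eventually_mono)
      fix j assume "\<omega> \<in> space M - Bad j"
      then obtain i where i: "i \<in> I j" "\<omega> \<in> F j i" by (auto simp: Bad_def)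
      have X: "\<forall>k. B (real (2*i+1) / 2^Suc j) \<omega> $ k - B (real i / 2^j) \<omega> $ k \<in> {c k * \<sigma> j .. (c k + \<epsilon>) * \<sigma> j}"
        using i(2) unfolding F_def C_def lo_def hi_def by (auto simp: t0 t1)
      have Y: "\<forall>k. B ((real i + 1) / 2^j) \<omega> $ k - B (real (2*i+1) / 2^Suc j) \<omega> $ k \<in> {(- c k - \<epsilon>) * \<sigma> j .. (- c k) * \<sigma> j}"
        using i(2) unfolding F_def C_def lo_def hi_def by (auto simp: t1 t2)
      have "norm (B ((real i + 1) / 2 ^ j) \<omega> - B (real i / 2 ^ j) \<omega>) \<le> 2 / sqrt 2 ^ j \<and>
         (SUP t\<in>{real i / 2 ^ j .. (real i + 1) / 2 ^ j}. norm (B t \<omega> - B (real i / 2 ^ j) \<omega>)) \<ge> a / sqrt 2 ^ j"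
        by (rule det[where kk=k0 and c=c and \<sigma>="\<sigma> j" and \<epsilon>=\<epsilon>])
           (use elim(2) X Y c0 assms(2) in \<open>auto simp: \<sigma>_def \<epsilon>_def c_def\<close>)
      then show "\<exists>i::nat. 1 \<le> i \<and> i \<le> 2 ^ j - 1 \<and>
            norm (B ((real i + 1) / 2 ^ j) \<omega> - B (real i / 2 ^ j) \<omega>) \<le> 2 / sqrt 2 ^ j \<and>
            (SUP t\<in>{real i / 2 ^ j .. (real i + 1) / 2 ^ j}.
                norm (B t \<omega> - B (real i / 2 ^ j) \<omega>)) \<ge> a / sqrt 2 ^ j"
        using i(1) by (auto simp: I_def)
    qed
  qed
qed


end
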